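(* Fix $s,z>0$ and define $$c_{s,z}=\min\Big\{\Big|1-\frac{s}{z}\Big|,1\Big\},\qquad t_{s,z}=(1+c_{s,z})s,$$ $$g_{s,z}(a)=\begin{cases}\max\{z-a,\min\{s-z,z\}\}&a\le s\\ 0&a>s,\end{cases}\qquad h_{s,z}(a)=\begin{cases}z& a\le c_{s,z}s\\ \frac{z}{s}\big(s-(a-c_{s,z}s)\big)& a>c_{s,z}s.\end{cases}$$ Then (i) $\displaystyle\int_0^{t_{s,z}}\frac{da}{1-\rho_Z(g_{s,z}(a))}=\mathbb{E}[T^{\mathrm{res}}_{\mathrm{SRPT\text{-}B}}(s,z)]+c_{s,z}s$; (ii) $\displaystyle\int_0^{t_{s,z}}\frac{da}{1-\rho_Z(h_{s,z}(a))}=\mathbb{E}[T^{\mathrm{res}}_{\mathrm{SRPT\text{-}SE}}(s,z)]+c_{s,z}\,\mathbb{E}[T^{\mathrm{res}}_{\mathrm{PSJF\text{-}E}}(s,z)]$; (iii) $g_{s,z}(a)\le h_{s,z}(a)$ for all $a\in(0,t_{s,z})$.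
   Context: Model: M/G/1 queue (Poisson arrivals of rate $\lambda$, single preemptive server of rate 1) in which each job has i.i.d. (true size, estimated size) pair distributed as $(S,Z)$ with a joint density; $0<\rho=\lambda\mathbb{E}[S]<1$. $\rho_Z(x)=\lambda\mathbb{E}[S\mathbf{1}(Z\le x)]$ (so $\rho_Z(x)=0$ for $x\le0$). Policies are defined by rank functions on states $(s,z,a)$ (age $a$), the job of least rank being served: SRPT-B: $\min\{|z-a|,z\}$; SRPT-SE: $\frac{z}{s}(s-a)$; PSJF-E: $z$. Worst future rank: $w_\pi(s,z,a)=\sup_{b\in[a,s)}r_\pi(s,z,b)$. Residence time of a tagged job is the time from its first service to its completion; $T^{\mathrm{res}}_\pi(s,z)$ is the residence time under $\pi$ of a tagged job with true size $s$ and estimated size $z$ arriving in steady state. Known fact (cited, may be used): for $\pi\in\{\text{SRPT-B},\text{SRPT-SE},\text{PSJF-E}\}$, $\mathbb{E}[T^{\mathrm{res}}_\pi(s,z)]=\int_0^s\frac{da}{1-\rho_Z(w_\pi(s,z,a))}$. *)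

theory Defs
  imports "HOL-Analysis.Analysis"
begin

datatype policy = SRPT_B | SRPT_SE | PSJF_E

text \<open>Rank functions on states (s, z, a): true size, estimated size, age.\<close>
fun rank :: "policy \<Rightarrow> real \<Rightarrow> real \<Rightarrow> real \<Rightarrow> real" where
  "rank SRPT_B s z a = min \<bar>z - a\<bar> z"
| "rank SRPT_SE s z a = z / s * (s - a)"
| "rank PSJF_E s z a = z"

definition worst_rank :: "policy \<Rightarrow> real \<Rightarrow> real \<Rightarrow> real \<Rightarrow> real" where
  "worst_rank p s z a = (SUP b\<in>{a..<s}. rank p s z b)"

text \<open>rho_Z(x) = lambda * E[S 1(Z \<le> x)] for a joint density f of (S, Z) on lborel (real x real).\<close>
definition rhoZ :: "real \<Rightarrow> (real \<times> real \<Rightarrow> real) \<Rightarrow> real \<Rightarrow> real" where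
  "rhoZ lam f x = lam * (\<integral>p. fst p * (if snd p \<le> x then 1 else 0) * f p \<partial>lborel)"

definition c_sz :: "real \<Rightarrow> real \<Rightarrow> real" where
  "c_sz s z = min \<bar>1 - s / z\<bar> 1"

definition t_sz :: "real \<Rightarrow> real \<Rightarrow> real" where
  "t_sz s z = (1 + c_sz s z) * s"

definition g_sz :: "real \<Rightarrow> real \<Rightarrow> real \<Rightarrow> real" where
  "g_sz s z a = (if a \<le> s then max (z - a) (min (s - z) z) else 0)"

definition h_sz :: "real \<Rightarrow> real \<Rightarrow> real \<Rightarrow> real" where
  "h_sz s z a = (if a \<le> c_sz s z * s then z
                 else z / s * (s - (a - c_sz s z * s)))"

end

theory Submission
  imports Defs
begin



lemma worst_PSJF: "a < s \<Longrightarrow> worst_rank PSJF_E s z a = z"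
  unfolding worst_rank_def by simp

lemma worst_SE: assumes "a < s" "s > 0" "z > 0"
  shows "worst_rank SRPT_SE s z a = z / s * (s - a)"
  unfolding worst_rank_def
proof (rule cSup_eq_maximum)
  show "z / s * (s - a) \<in> (\<lambda>b. rank SRPT_SE s z b) ` {a..<s}" using assms by force
  show "\<And>y. y \<in> (\<lambda>b. rank SRPT_SE s z b) ` {a..<s} \<Longrightarrow> y \<le> z / s * (s - a)"
    using assms by (auto intro!: divide_right_mono mult_left_mono)
qed

lemma worst_B: assumes "0 \<le> a" "a < s" "s > 0" "z > 0"
  shows "worst_rank SRPT_B s z a = max (z - a) (min (s - z) z)"
  unfolding worst_rank_def
proof (rule cSup_eq_non_empty)
  show "(\<lambda>b. rank SRPT_B s z b) ` {a..<s} \<noteq> {}" using assms by auto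
  show "\<And>x. x \<in> (\<lambda>b. rank SRPT_B s z b) ` {a..<s} \<Longrightarrow> x \<le> max (z - a) (min (s - z) z)"
    using assms by auto
  fix y assume ub: "\<And>x. x \<in> (\<lambda>b. rank SRPT_B s z b) ` {a..<s} \<Longrightarrow> x \<le> y"
  have ub': "\<And>b. a \<le> b \<Longrightarrow> b < s \<Longrightarrow> min \<bar>z - b\<bar> z \<le> y" using ub by force
  show "max (z - a) (min (s - z) z) \<le> y"
  proof (cases "z - a \<ge> min (s - z) z")
    case True
    then have "a \<le> z" using assms by auto
    then show ?thesis using ub'[of a] assms True by auto
  next
    case False
    then have sz: "s > z" using assms by auto
    show ?thesis
    proof (rule ccontr)
      assume "\<not> ?thesis"
      then have yl: "y < min (s - z) z" using False by auto
      define b0 where "b0 = z + (max y 0 + min (s - z) z) / 2"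
      define b where "b = max a b0"
      have "b0 < s" "z < b0" using yl sz assms unfolding b0_def by (auto simp: max_def min_def field_simps)
      then have "a \<le> b" "b < s" "z < b" using assms unfolding b_def by auto
      have "min \<bar>z - b\<bar> z > y"
        using yl \<open>z < b\<close> unfolding b_def b0_def by (auto simp: abs_if max_def min_def field_simps)
      then show False using ub'[OF \<open>a \<le> b\<close> \<open>b < s\<close>] by linarith
    qed
  qed
qed

lemma rhoZ_int:
  assumes f_meas: "f \<in> borel_measurable lborel"
    and f_nonneg: "\<And>p. f p \<ge> 0"
    and S_int: "integrable lborel (\<lambda>p. fst p * f p)"
  shows "integrable lborel (\<lambda>p::real\<times>real. fst p * (if snd p \<le> x then 1 else 0) * f p)"
proof (rule Bochner_Integration.integrable_bound[OF S_int])
  have f': "f \<in> borel_measurable borel" using f_meas by simp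
  have m1: "(\<lambda>p::real\<times>real. fst p) \<in> borel_measurable borel"
    by (intro borel_measurable_continuous_onI continuous_intros)
  have m2: "(\<lambda>p::real\<times>real. snd p) \<in> borel_measurable borel"
    by (intro borel_measurable_continuous_onI continuous_intros)
  have m3: "(\<lambda>p::real\<times>real. if snd p \<le> x then 1 else (0::real)) \<in> borel_measurable borel"
    using m2 by measurable
  have "(\<lambda>p::real\<times>real. fst p * (if snd p \<le> x then 1 else 0) * f p) \<in> borel_measurable borel"
    using f' m1 m3 by (intro borel_measurable_times) auto
  then show "(\<lambda>p::real\<times>real. fst p * (if snd p \<le> x then 1 else 0) * f p) \<in> borel_measurable lborel"
    by simp
  show "AE p in lborel. norm (fst p * (if snd p \<le> x then 1 else 0) * f p) \<le> norm (fst p * f p)"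
    using f_nonneg by (auto simp: abs_mult)
qed

theorem mainTheorem6:
  fixes lam :: real and f :: "real \<times> real \<Rightarrow> real"
    and ETres :: "policy \<Rightarrow> real \<Rightarrow> real \<Rightarrow> real"
    and s z :: real
  assumes f_meas: "f \<in> borel_measurable lborel"
    and f_nonneg: "\<And>p. f p \<ge> 0"
    and f_int: "integrable lborel f"
    and f_prob: "(\<integral>p. f p \<partial>lborel) = 1"
    and f_supp: "\<And>u v. f (u, v) \<noteq> 0 \<Longrightarrow> u > 0 \<and> v > 0"
    and S_int: "integrable lborel (\<lambda>p. fst p * f p)"
    and lam_pos: "lam > 0"
    and rho_pos: "0 < lam * (\<integral>p. fst p * f p \<partial>lborel)"
    and rho_lt1: "lam * (\<integral>p. fst p * f p \<partial>lborel) < 1"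
    and known: "\<And>p s' z'. s' > 0 \<Longrightarrow> z' > 0 \<Longrightarrow>
        ETres p s' z' = integral {0..s'} (\<lambda>a. 1 / (1 - rhoZ lam f (worst_rank p s' z' a)))"
    and s_pos: "s > 0" and z_pos: "z > 0"
  shows "integral {0..t_sz s z} (\<lambda>a. 1 / (1 - rhoZ lam f (g_sz s z a)))
           = ETres SRPT_B s z + c_sz s z * s
     \<and> integral {0..t_sz s z} (\<lambda>a. 1 / (1 - rhoZ lam f (h_sz s z a)))
           = ETres SRPT_SE s z + c_sz s z * ETres PSJF_E s z
     \<and> (\<forall>a\<in>{0<..<t_sz s z}. g_sz s z a \<le> h_sz s z a)"
  proof -
  define R where "R = rhoZ lam f"
  define F where "F = (\<lambda>x. 1 / (1 - R x))"
  define rho where "rho = lam * (\<integral>p. fst p * f p \<partial>lborel)"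
  have pos_int: "\<And>x p. fst p * (if snd p \<le> x then 1 else 0) * f p \<ge> 0"
  proof -
    fix x and p :: "real \<times> real"
    obtain u v where p: "p = (u, v)" by force
    show "fst p * (if snd p \<le> x then 1 else 0) * f p \<ge> 0"
      using f_supp[of u v] f_nonneg[of p] by (cases "f p = 0") (auto simp: p)
  qed
  have Rmono: "\<And>x y. x \<le> y \<Longrightarrow> R x \<le> R y"
  proof -
    fix x y :: real assume xy: "x \<le> y"
    have "(\<integral>p. fst p * (if snd p \<le> x then 1 else 0) * f p \<partial>lborel)
        \<le> (\<integral>p. fst p * (if snd p \<le> y then 1 else 0) * f p \<partial>lborel)"
    proof (rule integral_mono[OF rhoZ_int[OF f_meas f_nonneg S_int] rhoZ_int[OF f_meas f_nonneg S_int]])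
      fix p :: "real \<times> real"
      obtain u v where p: "p = (u, v)" by force
      show "fst p * (if snd p \<le> x then 1 else 0) * f p \<le> fst p * (if snd p \<le> y then 1 else 0) * f p"
        using f_supp[of u v] f_nonneg[of p] xy by (cases "f p = 0") (auto simp: p)
    qed
    then show "R x \<le> R y" unfolding R_def rhoZ_def using lam_pos by (simp add: mult_left_mono)
  qed
  have Rle: "\<And>x. R x \<le> rho"
  proof -
    fix x :: real
    have "(\<integral>p. fst p * (if snd p \<le> x then 1 else 0) * f p \<partial>lborel)
        \<le> (\<integral>p. fst p * f p \<partial>lborel)"
    proof (rule integral_mono[OF rhoZ_int[OF f_meas f_nonneg S_int] S_int])
      fix p :: "real \<times> real"
      obtain u v where p: "p = (u, v)" by force
      show "fst p * (if snd p \<le> x then 1 else 0) * f p \<le> fst p * f p"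
        using f_supp[of u v] f_nonneg[of p] by (cases "f p = 0") (auto simp: p)
    qed
    then show "R x \<le> rho" unfolding R_def rhoZ_def rho_def using lam_pos by (simp add: mult_left_mono)
  qed
  have R0: "R 0 = 0"
  proof -
    have "\<And>p::real\<times>real. fst p * (if snd p \<le> 0 then 1 else 0) * f p = 0"
    proof -
      fix p :: "real \<times> real"
      obtain u v where p: "p = (u, v)" by force
      show "fst p * (if snd p \<le> 0 then 1 else 0) * f p = 0"
        using f_supp[of u v] by (cases "f p = 0") (auto simp: p)
    qed
    then have zz: "(\<lambda>p::real\<times>real. fst p * (if snd p \<le> 0 then 1 else 0) * f p) = (\<lambda>p. 0)"
      by (intro ext)
    show ?thesis unfolding R_def rhoZ_def zz by simp
  qed
  have Rlt: "\<And>x. R x < 1" using Rle rho_lt1 unfolding rho_def by (meson le_less_trans)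
  have Fmono: "\<And>x y. x \<le> y \<Longrightarrow> F x \<le> F y"
  proof -
    fix x y :: real assume "x \<le> y"
    then have "R x \<le> R y" by (rule Rmono)
    moreover have "R y < 1" by (rule Rlt)
    ultimately show "F x \<le> F y" unfolding F_def by (intro divide_left_mono) (auto intro: mult_pos_pos)
  qed
  have F0: "F 0 = 1" unfolding F_def R0 by simp
  have kn: "\<And>p. ETres p s z = integral {0..s} (\<lambda>a. F (worst_rank p s z a))"
    using known[OF s_pos z_pos] unfolding F_def R_def by simp
  define c where "c = c_sz s z"
  have c0: "0 \<le> c" unfolding c_def c_sz_def by simp
  have t: "t_sz s z = c * s + s" unfolding t_sz_def c_def by (simp add: algebra_simps)
  have st: "s \<le> t_sz s z" "c * s \<le> t_sz s z" "0 \<le> c * s" using c0 s_pos t by auto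
  have gnn: "\<And>a. a \<le> s \<Longrightarrow> 0 \<le> g_sz s z a"
    unfolding g_sz_def using s_pos z_pos by (auto simp: max_def min_def)
  have ganti: "\<And>a b. a \<le> b \<Longrightarrow> g_sz s z b \<le> g_sz s z a"
  proof -
    fix a b :: real assume ab: "a \<le> b"
    show "g_sz s z b \<le> g_sz s z a"
    proof (cases "b \<le> s")
      case True then show ?thesis using ab unfolding g_sz_def by (auto simp: max_def)
    next
      case False then show ?thesis using gnn[of a] unfolding g_sz_def
        by (cases "a \<le> s") auto
    qed
  qed
  have hanti: "\<And>a b. a \<le> b \<Longrightarrow> h_sz s z b \<le> h_sz s z a"
  proof -
    fix a b :: real assume ab: "a \<le> b"
    have zs: "z / s > 0" using s_pos z_pos by simp
    show "h_sz s z b \<le> h_sz s z a"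
    proof (cases "b \<le> c * s")
      case True then show ?thesis using ab unfolding h_sz_def c_def by auto
    next
      case False
      show ?thesis
      proof (cases "a \<le> c * s")
        case True
        have "z / s * (s - (b - c * s)) \<le> z / s * s"
          using False zs by (intro mult_left_mono) auto
        then show ?thesis using True False s_pos unfolding h_sz_def c_def by auto
      next
        case F2: False
        have "z / s * (s - (b - c * s)) \<le> z / s * (s - (a - c * s))"
          using ab zs by (intro mult_left_mono) auto
        then show ?thesis using F2 False unfolding h_sz_def c_def by auto
      qed
    qed
  qed
  have intg: "(\<lambda>a. F (g_sz s z a)) integrable_on {0..t_sz s z}"
  proof -
    have "mono_on {0..t_sz s z} (\<lambda>a. - F (g_sz s z a))"
      by (rule mono_onI) (simp add: Fmono ganti)
    then have "(\<lambda>a. - F (g_sz s z a)) integrable_on {0..t_sz s z}" by (rule integrable_on_mono_on)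
    then show ?thesis using integrable_neg by fastforce
  qed
  have inth: "(\<lambda>a. F (h_sz s z a)) integrable_on {0..t_sz s z}"
  proof -
    have "mono_on {0..t_sz s z} (\<lambda>a. - F (h_sz s z a))"
      by (rule mono_onI) (simp add: Fmono hanti)
    then have "(\<lambda>a. - F (h_sz s z a)) integrable_on {0..t_sz s z}" by (rule integrable_on_mono_on)
    then show ?thesis using integrable_neg by fastforce
  qed
  have i1: "integral {0..s} (\<lambda>a. F (g_sz s z a)) = ETres SRPT_B s z"
    unfolding kn
  proof (rule integral_spike[of "{s}"])
    fix a assume "a \<in> {0..s} - {s}"
    then show "F (worst_rank SRPT_B s z a) = F (g_sz s z a)"
      using worst_B[of a s z] s_pos z_pos unfolding g_sz_def by auto
  qed auto
  have i2: "integral {s..t_sz s z} (\<lambda>a. F (g_sz s z a)) = c * s"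
  proof -
    have "integral {s..t_sz s z} (\<lambda>a. F (g_sz s z a)) = integral {s..t_sz s z} (\<lambda>a. 1)"
    proof (rule integral_spike[of "{s}"])
      fix a assume "a \<in> {s..t_sz s z} - {s}"
      then show "1 = F (g_sz s z a)" unfolding g_sz_def using F0 by auto
    qed auto
    then show ?thesis using st t by simp
  qed
  have partI: "integral {0..t_sz s z} (\<lambda>a. 1 / (1 - rhoZ lam f (g_sz s z a)))
           = ETres SRPT_B s z + c_sz s z * s"
    using Henstock_Kurzweil_Integration.integral_combine[OF _ st(1) intg] s_pos i1 i2
    unfolding F_def R_def c_def by simp
  have j1: "integral {0..c * s} (\<lambda>a. F (h_sz s z a)) = c * s * F z"
  proof -
    have "integral {0..c * s} (\<lambda>a. F (h_sz s z a)) = integral {0..c * s} (\<lambda>a. F z)"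
      by (rule integral_cong) (auto simp: h_sz_def c_def)
    then show ?thesis using st by simp
  qed
  have j2: "ETres PSJF_E s z = s * F z"
  proof -
    have "ETres PSJF_E s z = integral {0..s} (\<lambda>a. F z)"
      unfolding kn
      by (rule integral_spike[of "{s}"]) (auto simp: worst_PSJF)
    then show ?thesis using s_pos by simp
  qed
  have j3: "integral {c * s..t_sz s z} (\<lambda>a. F (h_sz s z a)) = ETres SRPT_SE s z"
  proof -
    have "integral {c * s..t_sz s z} (\<lambda>a. F (h_sz s z a))
        = integral {0..s} ((\<lambda>a. F (h_sz s z a)) \<circ> ((+) (c * s)))"
      using integral_shift_Icc_real[of 0 s "\<lambda>a. F (h_sz s z a)" "c * s"] t by (simp add: add.commute)
    also have "\<dots> = ETres SRPT_SE s z"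
      unfolding kn
    proof (rule integral_spike[of "{s}"])
      fix a assume a: "a \<in> {0..s} - {s}"
      have "h_sz s z (c * s + a) = z / s * (s - a)"
        using a s_pos z_pos unfolding h_sz_def c_def[symmetric] by auto
      then show "F (worst_rank SRPT_SE s z a) = ((\<lambda>a. F (h_sz s z a)) \<circ> (+) (c * s)) a"
        using worst_SE[of a s z] a s_pos z_pos by auto
    qed auto
    finally show ?thesis .
  qed
  have partII: "integral {0..t_sz s z} (\<lambda>a. 1 / (1 - rhoZ lam f (h_sz s z a)))
           = ETres SRPT_SE s z + c_sz s z * ETres PSJF_E s z"
    using Henstock_Kurzweil_Integration.integral_combine[OF st(3) st(2) inth] j1 j2 j3
    unfolding F_def R_def c_def by (simp add: algebra_simps)
  have partIII: "\<forall>a\<in>{0<..<t_sz s z}. g_sz s z a \<le> h_sz s z a"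
  proof
    fix a assume a: "a \<in> {0<..<t_sz s z}"
    have zs: "z / s > 0" using s_pos z_pos by simp
    show "g_sz s z a \<le> h_sz s z a"
    proof (cases "a \<le> c * s")
      case True
      then show ?thesis using a z_pos unfolding g_sz_def h_sz_def c_def by (auto simp: max_def min_def)
    next
      case False
      have hval: "h_sz s z a = z / s * (s - (a - c * s))" using False unfolding h_sz_def c_def by auto
      have hpos: "h_sz s z a > 0" unfolding hval using a t zs by (intro mult_pos_pos) auto
      show ?thesis
      proof (cases "a \<le> s")
        case False then show ?thesis using hpos unfolding g_sz_def by auto
      next
        case as: True
        have g: "g_sz s z a = max (z - a) (min (s - z) z)" using as unfolding g_sz_def by simp
        have e1: "z - a \<le> h_sz s z a"
        proof (cases "z \<le> s")
          case True
          have "z - a \<le> z / s * (s - a)"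
          proof -
            have "z / s * (s - a) = z - z * a / s" using s_pos by (simp add: field_simps)
            moreover have "z * a / s \<le> a" using True a s_pos
              by (simp add: divide_le_eq mult_right_mono mult.commute)
            ultimately show ?thesis by simp
          qed
          also have "\<dots> \<le> h_sz s z a" unfolding hval using zs c0 s_pos
            by (intro mult_left_mono) (auto intro: mult_nonneg_nonneg)
          finally show ?thesis .
        next
          case False
          have cv: "c = 1 - s / z" using False s_pos z_pos unfolding c_def c_sz_def
            by (auto simp: abs_if field_simps min_def)
          have "h_sz s z a = z / s * (s - a) + z * c" unfolding hval using s_pos by (simp add: field_simps)
          also have "z * c = z - s" unfolding cv using z_pos by (simp add: field_simps)
          finally have hv: "h_sz s z a = z / s * (s - a) + (z - s)" .
          have "1 \<le> z / s" using False s_pos by simp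
          then have "1 * (s - a) \<le> z / s * (s - a)" using as by (intro mult_right_mono) auto
          then have "z / s * (s - a) \<ge> s - a" by simp
          then show ?thesis unfolding hv by simp
        qed
        have e2: "min (s - z) z \<le> h_sz s z a"
        proof (cases "z \<le> s")
          case False then show ?thesis using hpos by simp
        next
          case True
          have "z / s * (c * s) \<le> h_sz s z a" unfolding hval using zs as
            by (intro mult_left_mono) auto
          moreover have "z / s * (c * s) = z * c" using s_pos by simp
          moreover have "min (s - z) z \<le> z * c"
          proof -
            have "s / z \<ge> 1" using True z_pos by simp
            then have "\<bar>1 - s / z\<bar> = s / z - 1" by simp
            then have "c = min (s / z - 1) 1" unfolding c_def c_sz_def by simp
            then have "z * c = min (s - z) z" using z_pos by (simp add: min_def field_simps)
            then show ?thesis by simp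
          qed
          ultimately show ?thesis by linarith
        qed
        show ?thesis unfolding g using e1 e2 by simp
      qed
    qed
  qed
  show ?thesis using partI partII partIII by blast
qed

end
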